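(* Let $P$ be a negative-stable standard TSS in decent ntytt format. Then every standard ntytt rule irredundantly provable from $P$ is negative-stable.
   Context: Actions $A\cup\{\tau\}$, $\tau\notin A$. Literals $t\xrightarrow{\alpha}u$ (positive) and $t\not\xrightarrow{\alpha}$ (negative) over terms of a signature $\Sigma$ with infinite variable set $V$. A rule $\frac{H}{\lambda}$ has premises $H$ and conclusion $\lambda$ (source = left term of $\lambda$); it is standard if $\lambda$ is positive; a TSS is standard if all its rules are. Irredundant proof of $\frac{H}{\lambda}$ from $P$: well-founded tree of literals, some leaves marked hypothesis, root $\lambda$, $H$ exactly the hypothesis labels, every non-hypothesis node $\mu$ with children labels $K$ such that $\frac{K}{\mu}$ is a substitution instance of a rule of $P$. ntytt rule: right-hand sides of positive premises are distinct variables not occurring in the source. Free variable: occurs neither in source nor in premise right-hand sides; lookahead: a variable occurs in a premise right-hand side and in a premise left-hand side; decent: no lookahead and no free variables. A standard rule $\frac{H}{t\xrightarrow{\alpha}u}$ is negative-stable if for every premise $w\not\xrightarrow{\gamma}$ in $H$, also $w\not\xrightarrow{\tau}$ is in $H$; a TSS is negative-stable if all its rules are. *)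

theory Defs
  imports Main
begin

datatype ('f, 'v) trm = Var 'v | Fn 'f "('f, 'v) trm list"

fun wf_term :: "('f \<Rightarrow> nat) \<Rightarrow> ('f, 'v) trm \<Rightarrow> bool" where
  "wf_term ar (Var x) = True"
| "wf_term ar (Fn f ts) = (length ts = ar f \<and> (\<forall>t\<in>set ts. wf_term ar t))"

fun vars :: "('f, 'v) trm \<Rightarrow> 'v set" where
  "vars (Var x) = {x}"
| "vars (Fn f ts) = (\<Union>t\<in>set ts. vars t)"

fun subst :: "('v \<Rightarrow> ('f, 'v) trm) \<Rightarrow> ('f, 'v) trm \<Rightarrow> ('f, 'v) trm" where
  "subst \<sigma> (Var x) = \<sigma> x"
| "subst \<sigma> (Fn f ts) = Fn f (map (subst \<sigma>) ts)"

datatype 'a act = Tau | Act 'a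

datatype ('f, 'v, 'a) lit =
    Pos "('f, 'v) trm" "'a act" "('f, 'v) trm"
  | Neg "('f, 'v) trm" "'a act"

fun wf_lit :: "('f \<Rightarrow> nat) \<Rightarrow> ('f, 'v, 'a) lit \<Rightarrow> bool" where
  "wf_lit ar (Pos t \<alpha> u) = (wf_term ar t \<and> wf_term ar u)"
| "wf_lit ar (Neg t \<alpha>) = wf_term ar t"

fun subst_lit :: "('v \<Rightarrow> ('f, 'v) trm) \<Rightarrow> ('f, 'v, 'a) lit \<Rightarrow> ('f, 'v, 'a) lit" where
  "subst_lit \<sigma> (Pos t \<alpha> u) = Pos (subst \<sigma> t) \<alpha> (subst \<sigma> u)"
| "subst_lit \<sigma> (Neg t \<alpha>) = Neg (subst \<sigma> t) \<alpha>"

fun lhs :: "('f, 'v, 'a) lit \<Rightarrow> ('f, 'v) trm" where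
  "lhs (Pos t \<alpha> u) = t"
| "lhs (Neg t \<alpha>) = t"

fun lit_vars :: "('f, 'v, 'a) lit \<Rightarrow> 'v set" where
  "lit_vars (Pos t \<alpha> u) = vars t \<union> vars u"
| "lit_vars (Neg t \<alpha>) = vars t"

fun is_pos :: "('f, 'v, 'a) lit \<Rightarrow> bool" where
  "is_pos (Pos t \<alpha> u) = True"
| "is_pos (Neg t \<alpha>) = False"

type_synonym ('f, 'v, 'a) rule = "('f, 'v, 'a) lit set \<times> ('f, 'v, 'a) lit"
type_synonym ('f, 'v, 'a) tss = "('f, 'v, 'a) rule set"

definition prems :: "('f, 'v, 'a) rule \<Rightarrow> ('f, 'v, 'a) lit set" where
  "prems r = fst r"

definition concl :: "('f, 'v, 'a) rule \<Rightarrow> ('f, 'v, 'a) lit" where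
  "concl r = snd r"

definition source :: "('f, 'v, 'a) rule \<Rightarrow> ('f, 'v) trm" where
  "source r = lhs (concl r)"

definition wf_rule :: "('f \<Rightarrow> nat) \<Rightarrow> ('f, 'v, 'a) rule \<Rightarrow> bool" where
  "wf_rule ar r = ((\<forall>l\<in>prems r. wf_lit ar l) \<and> wf_lit ar (concl r))"

definition standard_rule :: "('f, 'v, 'a) rule \<Rightarrow> bool" where
  "standard_rule r = is_pos (concl r)"

definition standard_tss :: "('f, 'v, 'a) tss \<Rightarrow> bool" where
  "standard_tss P = (\<forall>r\<in>P. standard_rule r)"

definition rhs_vars :: "('f, 'v, 'a) rule \<Rightarrow> 'v set" where
  "rhs_vars r = (\<Union>{vars u | t \<alpha> u. Pos t \<alpha> u \<in> prems r})"

definition lhs_vars :: "('f, 'v, 'a) rule \<Rightarrow> 'v set" where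
  "lhs_vars r = (\<Union>{vars (lhs l) | l. l \<in> prems r})"

definition rule_vars :: "('f, 'v, 'a) rule \<Rightarrow> 'v set" where
  "rule_vars r = lit_vars (concl r) \<union> (\<Union>{lit_vars l | l. l \<in> prems r})"

definition ntytt_rule :: "('f, 'v, 'a) rule \<Rightarrow> bool" where
  "ntytt_rule r =
     ((\<forall>t \<alpha> u. Pos t \<alpha> u \<in> prems r \<longrightarrow> (\<exists>y. u = Var y \<and> y \<notin> vars (source r))) \<and>
      (\<forall>t \<alpha> u t' \<alpha>' u'. Pos t \<alpha> u \<in> prems r \<longrightarrow> Pos t' \<alpha>' u' \<in> prems r \<longrightarrow>
          Pos t \<alpha> u \<noteq> Pos t' \<alpha>' u' \<longrightarrow> u \<noteq> u'))"

definition free_vars :: "('f, 'v, 'a) rule \<Rightarrow> 'v set" where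
  "free_vars r = rule_vars r - (vars (source r) \<union> rhs_vars r)"

definition has_lookahead :: "('f, 'v, 'a) rule \<Rightarrow> bool" where
  "has_lookahead r = (rhs_vars r \<inter> lhs_vars r \<noteq> {})"

definition decent_rule :: "('f, 'v, 'a) rule \<Rightarrow> bool" where
  "decent_rule r = (\<not> has_lookahead r \<and> free_vars r = {})"

definition decent_ntytt_tss :: "('f, 'v, 'a) tss \<Rightarrow> bool" where
  "decent_ntytt_tss P = (\<forall>r\<in>P. decent_rule r \<and> ntytt_rule r)"

definition negative_stable_rule :: "('f, 'v, 'a) rule \<Rightarrow> bool" where
  "negative_stable_rule r =
     (standard_rule r \<and> (\<forall>w \<gamma>. Neg w \<gamma> \<in> prems r \<longrightarrow> Neg w Tau \<in> prems r))"

definition negative_stable_tss :: "('f, 'v, 'a) tss \<Rightarrow> bool" where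
  "negative_stable_tss P = (\<forall>r\<in>P. negative_stable_rule r)"

definition subst_instance :: "('f \<Rightarrow> nat) \<Rightarrow> ('f, 'v, 'a) rule \<Rightarrow> ('f, 'v, 'a) rule \<Rightarrow> bool" where
  "subst_instance ar inst r =
     (\<exists>\<sigma>. (\<forall>x. wf_term ar (\<sigma> x)) \<and>
          prems inst = subst_lit \<sigma> ` prems r \<and> concl inst = subst_lit \<sigma> (concl r))"

text \<open>A proof tree: node set N, root, children function ch, labelling lab, and the set Hy of
  leaves marked as hypotheses.\<close>
definition is_tree :: "'n set \<Rightarrow> 'n \<Rightarrow> ('n \<Rightarrow> 'n set) \<Rightarrow> bool" where
  "is_tree N root ch =
     (root \<in> N \<and> (\<forall>n\<in>N. ch n \<subseteq> N) \<and>
      (\<forall>n\<in>N. (root, n) \<in> {(p, c). p \<in> N \<and> c \<in> ch p}\<^sup>*) \<and>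
      (\<forall>n\<in>N. root \<notin> ch n) \<and>
      (\<forall>c\<in>N. c \<noteq> root \<longrightarrow> (\<exists>!p. p \<in> N \<and> c \<in> ch p)) \<and>
      wf {(c, p). p \<in> N \<and> c \<in> ch p})"

definition irredundant_proof ::
  "('f \<Rightarrow> nat) \<Rightarrow> ('f, 'v, 'a) tss \<Rightarrow> 'n set \<Rightarrow> 'n \<Rightarrow> ('n \<Rightarrow> 'n set) \<Rightarrow>
   ('n \<Rightarrow> ('f, 'v, 'a) lit) \<Rightarrow> 'n set \<Rightarrow> ('f, 'v, 'a) rule \<Rightarrow> bool" where
  "irredundant_proof ar P N root ch lab Hy r =
     (is_tree N root ch \<and>
      (\<forall>n\<in>N. wf_lit ar (lab n)) \<and>
      Hy \<subseteq> N \<and> (\<forall>n\<in>Hy. ch n = {}) \<and>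
      lab root = concl r \<and>
      prems r = lab ` Hy \<and>
      (\<forall>n\<in>N - Hy. \<exists>\<rho>\<in>P. subst_instance ar (lab ` ch n, lab n) \<rho>))"

end

theory Submission
  imports Defs
begin

lemma subst_lit_is_pos: "is_pos (subst_lit \<sigma> l) = is_pos l"
  by (cases l) auto

theorem mainTheorem12:
  fixes ar :: "'f \<Rightarrow> nat"
    and P :: "('f, 'v, 'a) tss"
    and r :: "('f, 'v, 'a) rule"
    and N :: "'n set" and root :: 'n and ch :: "'n \<Rightarrow> 'n set"
    and lab :: "'n \<Rightarrow> ('f, 'v, 'a) lit" and Hy :: "'n set"
  assumes "infinite (UNIV :: 'v set)"
    and "\<forall>\<rho>\<in>P. wf_rule ar \<rho>"
    and "standard_tss P"
    and "negative_stable_tss P"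
    and "decent_ntytt_tss P"
    and "wf_rule ar r"
    and "standard_rule r"
    and "ntytt_rule r"
    and "irredundant_proof ar P N root ch lab Hy r"
  shows "negative_stable_rule r"
proof -
  have T: "is_tree N root ch" and Hs: "Hy \<subseteq> N" and Hc: "\<forall>n\<in>Hy. ch n = {}"
    and Rt: "lab root = concl r" and Pr: "prems r = lab ` Hy"
    and Rl: "\<forall>n\<in>N - Hy. \<exists>\<rho>\<in>P. subst_instance ar (lab ` ch n, lab n) \<rho>"
    using assms(9) unfolding irredundant_proof_def by auto
  have Ch: "\<forall>n\<in>N. ch n \<subseteq> N" and Par: "\<forall>c\<in>N. c \<noteq> root \<longrightarrow> (\<exists>!p. p \<in> N \<and> c \<in> ch p)"
    using T unfolding is_tree_def by auto
  have nonhyp_pos: "is_pos (lab n)" if "n \<in> N - Hy" for n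
  proof -
    obtain \<rho> where \<rho>: "\<rho> \<in> P" "subst_instance ar (lab ` ch n, lab n) \<rho>" using Rl \<open>n \<in> N - Hy\<close> by blast
    then obtain \<sigma> where "lab n = subst_lit \<sigma> (concl \<rho>)"
      unfolding subst_instance_def concl_def by auto
    moreover have "is_pos (concl \<rho>)" using assms(3) \<rho>(1)
      unfolding standard_tss_def standard_rule_def by blast
    ultimately show ?thesis by (simp add: subst_lit_is_pos)
  qed
  have "Neg w Tau \<in> prems r" if wg: "Neg w \<gamma> \<in> prems r" for w \<gamma>
  proof -
    obtain h where h: "h \<in> Hy" "lab h = Neg w \<gamma>" using wg Pr by auto
    have hN: "h \<in> N" using h Hs by auto
    have "h \<noteq> root" using h Rt assms(7) unfolding standard_rule_def by (cases "concl r") auto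
    then obtain p where p: "p \<in> N" "h \<in> ch p" using Par hN by blast
    have "p \<notin> Hy" using p Hc by auto
    then obtain \<rho> \<sigma> where \<rho>: "\<rho> \<in> P" "lab ` ch p = subst_lit \<sigma> ` prems \<rho>"
      using Rl p unfolding subst_instance_def prems_def by fastforce
    have "Neg w \<gamma> \<in> subst_lit \<sigma> ` prems \<rho>" using \<rho>(2) h p by (metis imageI)
    then obtain l where l: "l \<in> prems \<rho>" "subst_lit \<sigma> l = Neg w \<gamma>" by auto
    then obtain w' where w': "l = Neg w' \<gamma>" "subst \<sigma> w' = w" by (cases l) auto
    have "Neg w' Tau \<in> prems \<rho>" using assms(4) \<rho>(1) l w'
      unfolding negative_stable_tss_def negative_stable_rule_def by blast
    then have "Neg w Tau \<in> lab ` ch p" using \<rho>(2) w' by force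
    then obtain c where c: "c \<in> ch p" "lab c = Neg w Tau" by auto
    have "c \<in> N" using c p Ch by blast
    moreover have "\<not> is_pos (lab c)" using c by simp
    ultimately have "c \<in> Hy" using nonhyp_pos by blast
    then show ?thesis using c Pr by (metis imageI)
  qed
  then show ?thesis using assms(7) unfolding negative_stable_rule_def by blast
qed

end
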